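(* Consider the averaged buck-boost converter $-L\dot I=(1-u)V-uV_s$, $C\dot V=(1-u)I-GV$ with scalar constants $L>0$, $C>0$, $G\ge0$, $V_s\in\mathbb{R}$, extended by $\dot u=\upsilon$. Then this system is passive with respect to the storage function $S=\tfrac12L\dot I^2+\tfrac12C\dot V^2$ and the port-variables $\dot u$ and $y=\dot IV-\dot VI+V_s\dot I$, i.e. $\dot S\le\dot u\,y$.
   Context: $I$ is the inductor current, $V$ the capacitor voltage, $u\in[0,1]$ the duty cycle (averaged model). *)

theory Defs
  imports "HOL-Analysis.Analysis"
begin

end

theory Submission
  imports Defs
begin

theorem lemma5:
  fixes L C G Vs :: real and I V u :: "real \<Rightarrow> real" and t :: real
  assumes L_pos: "L > 0" and C_pos: "C > 0" and G_nonneg: "G \<ge> 0"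
    and I_diff: "\<forall>s. I differentiable at s"
    and I'_diff: "\<forall>s. deriv I differentiable at s"
    and V_diff: "\<forall>s. V differentiable at s"
    and V'_diff: "\<forall>s. deriv V differentiable at s"
    and u_diff: "\<forall>s. u differentiable at s"
    and u_range: "\<forall>s. 0 \<le> u s \<and> u s \<le> 1"
    and eqI: "\<forall>s. - L * deriv I s = (1 - u s) * V s - u s * Vs"
    and eqV: "\<forall>s. C * deriv V s = (1 - u s) * I s - G * V s"
  shows "(\<lambda>s. L * (deriv I s)^2 / 2 + C * (deriv V s)^2 / 2) differentiable at t
    \<and> deriv (\<lambda>s. L * (deriv I s)^2 / 2 + C * (deriv V s)^2 / 2) t
        \<le> deriv u t * (deriv I t * V t - deriv V t * I t + Vs * deriv I t)"
proof -
  define I1 where "I1 = deriv I t"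
  define V1 where "V1 = deriv V t"
  define u1 where "u1 = deriv u t"
  define I2 where "I2 = deriv (deriv I) t"
  define V2 where "V2 = deriv (deriv V) t"
  have dI: "(I has_real_derivative I1) (at t)" unfolding I1_def
    using I_diff by (simp add: DERIV_deriv_iff_real_differentiable)
  have dV: "(V has_real_derivative V1) (at t)" unfolding V1_def
    using V_diff by (simp add: DERIV_deriv_iff_real_differentiable)
  have du: "(u has_real_derivative u1) (at t)" unfolding u1_def
    using u_diff by (simp add: DERIV_deriv_iff_real_differentiable)
  have dI2: "(deriv I has_real_derivative I2) (at t)" unfolding I2_def
    using I'_diff by (simp add: DERIV_deriv_iff_real_differentiable)
  have dV2: "(deriv V has_real_derivative V2) (at t)" unfolding V2_def
    using V'_diff by (simp add: DERIV_deriv_iff_real_differentiable)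
  have fI: "(\<lambda>s. - L * deriv I s) = (\<lambda>s. (1 - u s) * V s - u s * Vs)" using eqI by auto
  have fV: "(\<lambda>s. C * deriv V s) = (\<lambda>s. (1 - u s) * I s - G * V s)" using eqV by auto
  have a1: "((\<lambda>s. - L * deriv I s) has_real_derivative (- L * I2)) (at t)"
    by (auto intro!: derivative_eq_intros dI2)
  have a2: "((\<lambda>s. (1 - u s) * V s - u s * Vs) has_real_derivative
        ((- u1) * V t + (1 - u t) * V1 - u1 * Vs)) (at t)"
    by (auto intro!: derivative_eq_intros du dV)
  have eI2: "- L * I2 = (- u1) * V t + (1 - u t) * V1 - u1 * Vs"
    using DERIV_unique[OF a1] a2 fI by metis
  have b1: "((\<lambda>s. C * deriv V s) has_real_derivative (C * V2)) (at t)"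
    by (auto intro!: derivative_eq_intros dV2)
  have b2: "((\<lambda>s. (1 - u s) * I s - G * V s) has_real_derivative
        ((- u1) * I t + (1 - u t) * I1 - G * V1)) (at t)"
    by (auto intro!: derivative_eq_intros du dV dI)
  have eV2: "C * V2 = (- u1) * I t + (1 - u t) * I1 - G * V1"
    using DERIV_unique[OF b1] b2 fV by metis
  have dS: "((\<lambda>s. L * (deriv I s)^2 / 2 + C * (deriv V s)^2 / 2) has_real_derivative
      (L * I1 * I2 + C * V1 * V2)) (at t)"
    unfolding I1_def V1_def
    by (auto intro!: derivative_eq_intros dI2 dV2 simp: algebra_simps)
  have "L * I1 * I2 + C * V1 * V2 = I1 * (L * I2) + V1 * (C * V2)" by simp
  also have "\<dots> = u1 * (I1 * V t - V1 * I t + Vs * I1) - G * V1^2"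
  proof -
    have x: "L * I2 = u1 * V t + u1 * Vs - (1 - u t) * V1" using eI2 by linarith
    have y: "C * V2 = (- u1) * I t + (1 - u t) * I1 - G * V1" using eV2 by linarith
    show ?thesis unfolding x y by (simp add: algebra_simps power2_eq_square)
  qed
  also have "\<dots> \<le> u1 * (I1 * V t - V1 * I t + Vs * I1)" using G_nonneg by simp
  finally show ?thesis using dS DERIV_imp_deriv[OF dS]
    unfolding I1_def V1_def u1_def using real_differentiable_def by auto
qed

end
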